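(* Let $n\ge 2$, let $T=\{1,\dots,n\}$ and let $\mathcal T$ be a topology on $T$. Fix an integer $k\ge 1$. Let $A,R\subseteq T\setminus\{n\}$ be disjoint sets such that every point of $A$ is old (at stage $k$), every point of $R$ is new (at stage $k$), and $A\cup R\cup\{n\}$ is a new lower $k$-system of $\mathcal T$. Then at least one of the two sets $A$ or $A\cup\{n\}$ is open in $\mathcal T$.
   Context: For $\alpha\in T$, $\alpha^{*}$ (the covering set of $\alpha$) denotes the smallest open set of $\mathcal T$ containing $\alpha$. For an integer $m\ge 0$, an $m$-system is an open set $P$ of $\mathcal T$ such that $P\setminus\{n\}$ has exactly $m$ points; it is upper if $n\notin P$ and lower if $n\in P$. For fixed $k$, a point $\alpha\neq n$ is called old if $\alpha^{*}$ is an $m$-system for some $m<k$, and new if $\alpha^{*}$ is a $k$-system. A $k$-system is called new if it contains at least one point $p\neq n$ that is not contained in any $m$-system with $m\le k-1$. *)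

theory Defs
  imports "HOL-Analysis.Analysis"
begin

text \<open>A topology on T = {1..n} is an \<open>X :: nat topology\<close> with \<open>topspace X = {1..n}\<close>.
  The distinguished point is n.\<close>

definition covering_set :: "nat topology \<Rightarrow> nat \<Rightarrow> nat set" where
  "covering_set X a = \<Inter> {U. openin X U \<and> a \<in> U}"

definition m_system :: "nat topology \<Rightarrow> nat \<Rightarrow> nat \<Rightarrow> nat set \<Rightarrow> bool" where
  "m_system X n m P \<longleftrightarrow> openin X P \<and> card (P - {n}) = m"

definition upper_m_system :: "nat topology \<Rightarrow> nat \<Rightarrow> nat \<Rightarrow> nat set \<Rightarrow> bool" where
  "upper_m_system X n m P \<longleftrightarrow> m_system X n m P \<and> n \<notin> P"

definition lower_m_system :: "nat topology \<Rightarrow> nat \<Rightarrow> nat \<Rightarrow> nat set \<Rightarrow> bool" where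
  "lower_m_system X n m P \<longleftrightarrow> m_system X n m P \<and> n \<in> P"

definition old_point :: "nat topology \<Rightarrow> nat \<Rightarrow> nat \<Rightarrow> nat \<Rightarrow> bool" where
  "old_point X n k a \<longleftrightarrow> a \<noteq> n \<and> (\<exists>m<k. m_system X n m (covering_set X a))"

definition new_point :: "nat topology \<Rightarrow> nat \<Rightarrow> nat \<Rightarrow> nat \<Rightarrow> bool" where
  "new_point X n k a \<longleftrightarrow> a \<noteq> n \<and> m_system X n k (covering_set X a)"

definition new_k_system :: "nat topology \<Rightarrow> nat \<Rightarrow> nat \<Rightarrow> nat set \<Rightarrow> bool" where
  "new_k_system X n k P \<longleftrightarrow> m_system X n k P \<and>
     (\<exists>p\<in>P. p \<noteq> n \<and> \<not> (\<exists>m Q. m \<le> k - 1 \<and> m_system X n m Q \<and> p \<in> Q))"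

end

theory Submission
  imports Defs
begin

lemma cov_open:
  assumes "finite (topspace X)" "a \<in> topspace X"
  shows "openin X (covering_set X a)"
proof -
  have "{U. openin X U \<and> a \<in> U} \<subseteq> Pow (topspace X)"
    using openin_subset by blast
  hence f: "finite {U. openin X U \<and> a \<in> U}"
    using assms(1) finite_subset by blast
  have "topspace X \<in> {U. openin X U \<and> a \<in> U}" using assms by auto
  hence "{U. openin X U \<and> a \<in> U} \<noteq> {}" by blast
  thus ?thesis unfolding covering_set_def using f by (intro openin_Inter) auto
qed

lemma cov_mem: "a \<in> covering_set X a"
  unfolding covering_set_def by blast

lemma cov_sub: "openin X U \<Longrightarrow> a \<in> U \<Longrightarrow> covering_set X a \<subseteq> U"
  unfolding covering_set_def by blast

theorem lemma3:
  fixes X :: "nat topology" and n k :: nat and A R :: "nat set"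
  assumes "n \<ge> 2"
    and "topspace X = {1..n}"
    and "k \<ge> 1"
    and "A \<subseteq> {1..n} - {n}" and "R \<subseteq> {1..n} - {n}"
    and "A \<inter> R = {}"
    and "\<forall>a\<in>A. old_point X n k a"
    and "\<forall>r\<in>R. new_point X n k r"
    and "new_k_system X n k (A \<union> R \<union> {n})"
    and "lower_m_system X n k (A \<union> R \<union> {n})"
  shows "openin X A \<or> openin X (A \<union> {n})"
proof -
  let ?P = "A \<union> R \<union> {n}"
  have Po: "openin X ?P" using assms(10) unfolding lower_m_system_def m_system_def by auto
  have fin: "finite (topspace X)" using assms(2) by simp
  define U where "U = (\<Union>a\<in>A. covering_set X a)"
  have Uo: "openin X U" unfolding U_def
    using cov_open[OF fin] assms(2,4) by (intro openin_Union) auto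
  have AU: "A \<subseteq> U" unfolding U_def using cov_mem by blast
  have UP: "U \<subseteq> ?P" unfolding U_def using cov_sub[OF Po] by blast
  have UR: "U \<inter> R = {}"
  proof (rule ccontr)
    assume "U \<inter> R \<noteq> {}"
    then obtain a r where a: "a \<in> A" and r: "r \<in> R" and ra: "r \<in> covering_set X a"
      unfolding U_def by blast
    obtain m where m: "m < k" "m_system X n m (covering_set X a)"
      using assms(7) a unfolding old_point_def by blast
    have ao: "openin X (covering_set X a)" using m(2) unfolding m_system_def by auto
    have sub: "covering_set X r \<subseteq> covering_set X a" using cov_sub[OF ao ra] .
    have "covering_set X a \<subseteq> topspace X" using ao openin_subset by blast
    hence fa: "finite (covering_set X a - {n})" using fin finite_subset by blast
    have "card (covering_set X r - {n}) \<le> card (covering_set X a - {n})"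
      using sub fa by (intro card_mono) auto
    moreover have "card (covering_set X r - {n}) = k"
      using assms(8) r unfolding new_point_def m_system_def by auto
    moreover have "card (covering_set X a - {n}) = m" using m(2) unfolding m_system_def by auto
    ultimately show False using m(1) by simp
  qed
  have "U = A \<or> U = A \<union> {n}" using AU UP UR by blast
  thus ?thesis using Uo by auto
qed

end
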